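(* Let $\mathbb P=\langle P,<\rangle$ be a strict partial order with $|P|=\kappa\ge\omega$ satisfying (u1) for all nonempty $L,G\in[P]^{<\kappa}$ with $L<G$ there is $x\in P$ with $L<x<G$; (u2) for every nonempty $K\in[P]^{<\kappa}$ there are $x,y,z\in P$ with $x<K$, $y>K$ and $z\parallel K$. Let $L,G,K\in[P]^{<\kappa}$ be nonempty with $L<G$. Then: (a) $|\{x\in P:L<x<G\}|=\kappa$; (b) $|\{x\in P:x<K\}|=|\{x\in P:x>K\}|=|\{x\in P:x\parallel K\}|=\kappa$; (c) if $\kappa$ is a regular cardinal, then $\mathbb P$ is not reversible. (d) Consequently, if $\kappa$ is a regular infinite cardinal and $\mathbb P$ is a $\kappa$-homogeneous-universal poset of size $\kappa$, then $\mathbb P$ is not reversible (in particular, the countable random poset is not reversible).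
   Context: $[P]^{<\kappa}$ is the set of subsets of $P$ of size $<\kappa$. For $p,q\in P$, $p\parallel q$ means $p\not\le q$ and $q\not\le p$. For $A,B\subseteq P$, $A<B$ means $a<b$ for all $a\in A,b\in B$; $x<K$ means $\{x\}<K$, etc., and $z\parallel K$ means $z\parallel k$ for all $k\in K$. A structure is reversible iff every bijective homomorphism from it onto itself (i.e. bijection $F:P\to P$ with $p<q\Rightarrow F(p)<F(q)$) is an automorphism. A poset $\mathbb P$ of size $\kappa$ is $\kappa$-homogeneous-universal iff every isomorphism between substructures of $\mathbb P$ of size $<\kappa$ extends to an automorphism of $\mathbb P$, and every poset of size $\le\kappa$ embeds into $\mathbb P$. *)

theory Defs
  imports Main
begin

definition strict_po :: "'a set \<Rightarrow> ('a \<Rightarrow> 'a \<Rightarrow> bool) \<Rightarrow> bool" where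
  "strict_po P r \<longleftrightarrow> (\<forall>x\<in>P. \<not> r x x) \<and>
     (\<forall>x\<in>P. \<forall>y\<in>P. \<forall>z\<in>P. r x y \<longrightarrow> r y z \<longrightarrow> r x z)"

definition incomp :: "('a \<Rightarrow> 'a \<Rightarrow> bool) \<Rightarrow> 'a \<Rightarrow> 'a \<Rightarrow> bool" where
  "incomp r p q \<longleftrightarrow> \<not> (p = q \<or> r p q) \<and> \<not> (q = p \<or> r q p)"

definition set_less :: "('a \<Rightarrow> 'a \<Rightarrow> bool) \<Rightarrow> 'a set \<Rightarrow> 'a set \<Rightarrow> bool" where
  "set_less r A B \<longleftrightarrow> (\<forall>a\<in>A. \<forall>b\<in>B. r a b)"

definition small_subset :: "'a set \<Rightarrow> 'a set \<Rightarrow> bool" where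
  "small_subset P A \<longleftrightarrow> A \<subseteq> P \<and> (card_of A, card_of P) \<in> ordLess"

definition cond_u1 :: "'a set \<Rightarrow> ('a \<Rightarrow> 'a \<Rightarrow> bool) \<Rightarrow> bool" where
  "cond_u1 P r \<longleftrightarrow> (\<forall>L G. small_subset P L \<and> small_subset P G \<and> L \<noteq> {} \<and> G \<noteq> {}
      \<and> set_less r L G \<longrightarrow> (\<exists>x\<in>P. set_less r L {x} \<and> set_less r {x} G))"

definition cond_u2 :: "'a set \<Rightarrow> ('a \<Rightarrow> 'a \<Rightarrow> bool) \<Rightarrow> bool" where
  "cond_u2 P r \<longleftrightarrow> (\<forall>K. small_subset P K \<and> K \<noteq> {} \<longrightarrow>
      (\<exists>x\<in>P. \<exists>y\<in>P. \<exists>z\<in>P. set_less r {x} K \<and> set_less r K {y} \<and> (\<forall>k\<in>K. incomp r z k)))"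

definition bij_hom :: "'a set \<Rightarrow> ('a \<Rightarrow> 'a \<Rightarrow> bool) \<Rightarrow> ('a \<Rightarrow> 'a) \<Rightarrow> bool" where
  "bij_hom P r F \<longleftrightarrow> bij_betw F P P \<and> (\<forall>p\<in>P. \<forall>q\<in>P. r p q \<longrightarrow> r (F p) (F q))"

definition automorphism :: "'a set \<Rightarrow> ('a \<Rightarrow> 'a \<Rightarrow> bool) \<Rightarrow> ('a \<Rightarrow> 'a) \<Rightarrow> bool" where
  "automorphism P r F \<longleftrightarrow> bij_betw F P P \<and> (\<forall>p\<in>P. \<forall>q\<in>P. r p q \<longleftrightarrow> r (F p) (F q))"

definition reversible :: "'a set \<Rightarrow> ('a \<Rightarrow> 'a \<Rightarrow> bool) \<Rightarrow> bool" where
  "reversible P r \<longleftrightarrow> (\<forall>F. bij_hom P r F \<longrightarrow> automorphism P r F)"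

definition sub_iso :: "('a \<Rightarrow> 'a \<Rightarrow> bool) \<Rightarrow> 'a set \<Rightarrow> 'a set \<Rightarrow> ('a \<Rightarrow> 'a) \<Rightarrow> bool" where
  "sub_iso r A B f \<longleftrightarrow> bij_betw f A B \<and> (\<forall>a\<in>A. \<forall>a'\<in>A. r a a' \<longleftrightarrow> r (f a) (f a'))"

definition order_embedding :: "'b set \<Rightarrow> ('b \<Rightarrow> 'b \<Rightarrow> bool) \<Rightarrow> 'a set \<Rightarrow> ('a \<Rightarrow> 'a \<Rightarrow> bool) \<Rightarrow> ('b \<Rightarrow> 'a) \<Rightarrow> bool" where
  "order_embedding Q s P r f \<longleftrightarrow> inj_on f Q \<and> f ` Q \<subseteq> P \<and>
     (\<forall>a\<in>Q. \<forall>b\<in>Q. s a b \<longleftrightarrow> r (f a) (f b))"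

(* Every poset of size \<le> \<kappa> is isomorphic to one whose
   carrier is a subset of the ambient type of P (as |P| = \<kappa>), so quantifying over such
   posets covers all posets of size \<le> \<kappa> up to isomorphism. *)
definition homogeneous_universal :: "'a set \<Rightarrow> ('a \<Rightarrow> 'a \<Rightarrow> bool) \<Rightarrow> bool" where
  "homogeneous_universal P r \<longleftrightarrow>
     (\<forall>A B f. small_subset P A \<and> small_subset P B \<and> sub_iso r A B f \<longrightarrow>
        (\<exists>F. automorphism P r F \<and> (\<forall>a\<in>A. F a = f a))) \<and>
     (\<forall>(Q::'a set) s. (card_of Q, card_of P) \<in> ordLeq \<and> strict_po Q s \<longrightarrow> (\<exists>g. order_embedding Q s P r g))"

end

theory Submission
  imports Defs
begin
unbundle cardinal_syntax

lemma small_mono: "A \<subseteq> B \<Longrightarrow> small_subset P B \<Longrightarrow> small_subset P A"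
  unfolding small_subset_def using card_of_mono1 ordLeq_ordLess_trans by blast

lemma small_Un: "infinite P \<Longrightarrow> small_subset P A \<Longrightarrow> small_subset P B \<Longrightarrow> small_subset P (A \<union> B)"
  unfolding small_subset_def using card_of_Un_ordLess_infinite by blast

lemma finite_small: "infinite P \<Longrightarrow> finite A \<Longrightarrow> A \<subseteq> P \<Longrightarrow> small_subset P A"
  unfolding small_subset_def using finite_ordLess_infinite[of "|A|" "|P|"]
  by (simp add: card_of_Well_order Field_card_of card_of_well_order_on)

lemma exists_outside:
  assumes "( |T|, |P| ) \<in> ordIso" "( |A|, |P| ) \<in> ordLess"
  shows "\<exists>x\<in>T. x \<notin> A"
proof (rule ccontr)
  assume "\<not> ?thesis"
  hence "T \<subseteq> A" by blast
  hence "|T| \<le>o |A|" by (rule card_of_mono1)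
  hence "|T| <o |P|" using assms(2) ordLeq_ordLess_trans by blast
  thus False using assms(1) not_ordLess_ordIso by blast
qed

lemma not_small_iso:
  assumes "S \<subseteq> P" "\<not> small_subset P S"
  shows "( |S|, |P| ) \<in> ordIso"
  using assms unfolding small_subset_def
  using card_of_mono1 ordLeq_iff_ordLess_or_ordIso by blast

lemma u2D:
  assumes "cond_u2 P r" "small_subset P K" "K \<noteq> {}"
  shows "(\<exists>x\<in>P. set_less r {x} K) \<and> (\<exists>y\<in>P. set_less r K {y}) \<and> (\<exists>z\<in>P. \<forall>k\<in>K. incomp r z k)"
proof -
  have "\<exists>x\<in>P. \<exists>y\<in>P. \<exists>z\<in>P. set_less r {x} K \<and> set_less r K {y} \<and> (\<forall>k\<in>K. incomp r z k)"
    using assms unfolding cond_u2_def by simp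
  then show ?thesis by blast
qed

lemma u1D:
  assumes "cond_u1 P r" "small_subset P L" "small_subset P G" "L \<noteq> {}" "G \<noteq> {}" "set_less r L G"
  shows "\<exists>x\<in>P. set_less r L {x} \<and> set_less r {x} G"
  using assms unfolding cond_u1_def by simp

lemma part_a:
  assumes po: "strict_po P r" and inf: "infinite P" and u1: "cond_u1 P r"
    and L: "small_subset P L" "L \<noteq> {}" and G: "small_subset P G" "G \<noteq> {}"
    and LG: "set_less r L G"
  shows "( |{x\<in>P. set_less r L {x} \<and> set_less r {x} G}|, |P| ) \<in> ordIso"
proof (rule not_small_iso)
  let ?S = "{x\<in>P. set_less r L {x} \<and> set_less r {x} G}"
  show "?S \<subseteq> P" by blast
  show "\<not> small_subset P ?S"
  proof
    assume "small_subset P ?S"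
    hence "small_subset P (G \<union> ?S)" by (rule small_Un[OF inf G(1)])
    moreover have "set_less r L (G \<union> ?S)" using LG unfolding set_less_def by auto
    moreover have "G \<union> ?S \<noteq> {}" using G by blast
    ultimately obtain x where x: "x \<in> P" "set_less r L {x}" "set_less r {x} (G \<union> ?S)"
      using u1D[OF u1 L(1) _ L(2)] by blast
    hence "x \<in> ?S" unfolding set_less_def by auto
    hence "r x x" using x unfolding set_less_def by auto
    thus False using po x unfolding strict_po_def by auto
  qed
qed

lemma part_b:
  assumes po: "strict_po P r" and inf: "infinite P" and u2: "cond_u2 P r"
    and K: "small_subset P K" "K \<noteq> {}"
  shows "( |{x\<in>P. set_less r {x} K}|, |P| ) \<in> ordIso"
    "( |{x\<in>P. set_less r K {x}}|, |P| ) \<in> ordIso"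
    "( |{x\<in>P. \<forall>k\<in>K. incomp r x k}|, |P| ) \<in> ordIso"
proof -
  have irr: "\<And>x. x \<in> P \<Longrightarrow> \<not> r x x" using po unfolding strict_po_def by auto
  show "( |{x\<in>P. set_less r {x} K}|, |P| ) \<in> ordIso"
  proof (rule not_small_iso)
    let ?S = "{x\<in>P. set_less r {x} K}"
    show "?S \<subseteq> P" by blast
    show "\<not> small_subset P ?S"
    proof
      assume "small_subset P ?S"
      hence sm: "small_subset P (K \<union> ?S)" by (rule small_Un[OF inf K(1)])
      have ne: "K \<union> ?S \<noteq> {}" using K by blast
      obtain x where x: "x \<in> P" "set_less r {x} (K \<union> ?S)"
        using u2D[OF u2 sm ne] by blast
      have xs: "x \<in> ?S" using x unfolding set_less_def by blast
      have "r x x" using x(2) xs unfolding set_less_def by blast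
      thus False using irr x(1) by blast
    qed
  qed
  show "( |{x\<in>P. set_less r K {x}}|, |P| ) \<in> ordIso"
  proof (rule not_small_iso)
    let ?S = "{x\<in>P. set_less r K {x}}"
    show "?S \<subseteq> P" by blast
    show "\<not> small_subset P ?S"
    proof
      assume "small_subset P ?S"
      hence sm: "small_subset P (K \<union> ?S)" by (rule small_Un[OF inf K(1)])
      have ne: "K \<union> ?S \<noteq> {}" using K by blast
      obtain x where x: "x \<in> P" "set_less r (K \<union> ?S) {x}"
        using u2D[OF u2 sm ne] by blast
      have xs: "x \<in> ?S" using x unfolding set_less_def by blast
      have "r x x" using x(2) xs unfolding set_less_def by blast
      thus False using irr x(1) by blast
    qed
  qed
  show "( |{x\<in>P. \<forall>k\<in>K. incomp r x k}|, |P| ) \<in> ordIso"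
  proof (rule not_small_iso)
    let ?S = "{x\<in>P. \<forall>k\<in>K. incomp r x k}"
    show "?S \<subseteq> P" by blast
    show "\<not> small_subset P ?S"
    proof
      assume "small_subset P ?S"
      hence sm: "small_subset P (K \<union> ?S)" by (rule small_Un[OF inf K(1)])
      have ne: "K \<union> ?S \<noteq> {}" using K by blast
      obtain x where x: "x \<in> P" "\<forall>k\<in>K \<union> ?S. incomp r x k"
        using u2D[OF u2 sm ne] by blast
      have xs: "x \<in> ?S" using x by blast
      have "incomp r x x" using x(2) xs by blast
      thus False unfolding incomp_def by blast
    qed
  qed
qed


definition goodm :: "'a set \<Rightarrow> ('a \<Rightarrow> 'a \<Rightarrow> bool) \<Rightarrow> ('a \<times> 'a) set \<Rightarrow> bool" where
  "goodm P r U \<longleftrightarrow> U \<subseteq> P \<times> P \<and> (\<forall>x y x' y'. (x,y)\<in>U \<longrightarrow> (x',y')\<in>U \<longrightarrow>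
      (x = x' \<longleftrightarrow> y = y') \<and> (r x x' \<longrightarrow> r y y'))"

definition fwd :: "'a set \<Rightarrow> ('a \<Rightarrow> 'a \<Rightarrow> bool) \<Rightarrow> ('a \<times> 'a) set \<Rightarrow> 'a \<Rightarrow> 'a" where
  "fwd P r U a = (SOME y. y \<in> P \<and> y \<notin> Range U \<and>
      (\<forall>q q'. (q,q')\<in>U \<longrightarrow> (r q a \<longrightarrow> r q' y) \<and> (r a q \<longrightarrow> r y q')))"

definition bck :: "'a set \<Rightarrow> ('a \<Rightarrow> 'a \<Rightarrow> bool) \<Rightarrow> ('a \<times> 'a) set \<Rightarrow> 'a \<Rightarrow> 'a" where
  "bck P r U a = (SOME p. p \<in> P \<and> p \<notin> Domain U \<and> (\<forall>q\<in>Domain U. incomp r p q))"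

definition step1 :: "'a set \<Rightarrow> ('a \<Rightarrow> 'a \<Rightarrow> bool) \<Rightarrow> ('a \<times> 'a) set \<Rightarrow> 'a \<Rightarrow> ('a \<times> 'a) set" where
  "step1 P r U a = (if a \<in> Domain U then U else insert (a, fwd P r U a) U)"

definition step2 :: "'a set \<Rightarrow> ('a \<Rightarrow> 'a \<Rightarrow> bool) \<Rightarrow> ('a \<times> 'a) set \<Rightarrow> 'a \<Rightarrow> ('a \<times> 'a) set" where
  "step2 P r U a = (if a \<in> Range U then U else insert (bck P r U a, a) U)"

definition stepM :: "'a set \<Rightarrow> ('a \<Rightarrow> 'a \<Rightarrow> bool) \<Rightarrow> ('a \<times> 'a) set \<Rightarrow> 'a \<Rightarrow> ('a \<times> 'a) set" where
  "stepM P r U a = step2 P r (step1 P r U a) a"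

lemma stepM_sup: "U \<subseteq> stepM P r U a"
  unfolding stepM_def step1_def step2_def by auto

lemma stepM_sub: "stepM P r U a \<subseteq> U \<union> {(a, fwd P r U a), (bck P r (step1 P r U a) a, a)}"
  unfolding stepM_def step1_def step2_def by auto

lemma fin_less: "finite A \<Longrightarrow> infinite B \<Longrightarrow> |A| <o |B|"
  using finite_ordLess_infinite[of "|A|" "|B|"]
  by (simp add: card_of_Well_order Field_card_of card_of_well_order_on)

lemma insert_less: "infinite B \<Longrightarrow> |U| <o |B| \<Longrightarrow> |insert x U| <o |B|"
proof -
  assume a: "infinite B" "|U| <o |B|"
  have "|{x}| <o |B|" using fin_less a by blast
  hence "|{x} \<union> U| <o |B|" using card_of_Un_ordLess_infinite a by blast
  thus ?thesis by simp
qed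

lemma goodm_insert:
  assumes g: "goodm P r U" and "x \<in> P" "y \<in> P" "x \<notin> Domain U" "y \<notin> Range U" "\<not> r x x"
    and c: "\<forall>q q'. (q,q')\<in>U \<longrightarrow> (r q x \<longrightarrow> r q' y) \<and> (r x q \<longrightarrow> r y q')"
  shows "goodm P r (insert (x,y) U)"
proof -
  have n1: "\<And>y'. (x,y') \<notin> U" using assms(4) by blast
  have n2: "\<And>x'. (x',y) \<notin> U" using assms(5) by blast
  show ?thesis unfolding goodm_def
  proof (intro conjI allI impI)
    show "insert (x, y) U \<subseteq> P \<times> P" using g assms(2,3) unfolding goodm_def by blast
  next
    fix x1 y1 x2 y2 assume h: "(x1,y1) \<in> insert (x,y) U" "(x2,y2) \<in> insert (x,y) U"
    show "(x1 = x2) = (y1 = y2)"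
      using h n1 n2 g unfolding goodm_def by blast
  next
    fix x1 y1 x2 y2 assume h: "(x1,y1) \<in> insert (x,y) U" "(x2,y2) \<in> insert (x,y) U" "r x1 x2"
    show "r y1 y2"
    proof (cases "(x1,y1) = (x,y)")
      case True
      show ?thesis
      proof (cases "(x2,y2) = (x,y)")
        case True thus ?thesis using \<open>(x1,y1) = (x,y)\<close> h(3) assms(6) by simp
      next
        case False thus ?thesis using \<open>(x1,y1) = (x,y)\<close> h c by auto
      qed
    next
      case False
      show ?thesis
      proof (cases "(x2,y2) = (x,y)")
        case True thus ?thesis using \<open>(x1,y1) \<noteq> (x,y)\<close> h c by auto
      next
        case False thus ?thesis using \<open>(x1,y1) \<noteq> (x,y)\<close> h g unfolding goodm_def by blast
      qed
    qed
  qed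
qed

lemma Range_small:
  assumes "goodm P r U" "|U| <o |P|" shows "small_subset P (Range U)"
proof -
  have "Range U = snd ` U" by force
  hence "|Range U| \<le>o |U|" using card_of_image by metis
  moreover have "Range U \<subseteq> P" using assms(1) unfolding goodm_def by blast
  ultimately show ?thesis using assms(2) ordLeq_ordLess_trans unfolding small_subset_def by blast
qed

lemma Domain_small:
  assumes "goodm P r U" "|U| <o |P|" shows "small_subset P (Domain U)"
proof -
  have "Domain U = fst ` U" by force
  hence "|Domain U| \<le>o |U|" using card_of_image by metis
  moreover have "Domain U \<subseteq> P" using assms(1) unfolding goodm_def by blast
  ultimately show ?thesis using assms(2) ordLeq_ordLess_trans unfolding small_subset_def by blast
qed

locale bf =
  fixes P :: "'a set" and r :: "'a \<Rightarrow> 'a \<Rightarrow> bool"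
  assumes po: "strict_po P r" and inf: "infinite P" and u1: "cond_u1 P r" and u2: "cond_u2 P r"
begin

lemma irr: "x \<in> P \<Longrightarrow> \<not> r x x" using po unfolding strict_po_def by blast

lemma trn: "x \<in> P \<Longrightarrow> y \<in> P \<Longrightarrow> z \<in> P \<Longrightarrow> r x y \<Longrightarrow> r y z \<Longrightarrow> r x z"
  using po unfolding strict_po_def by blast

lemma fwd_ex:
  assumes g: "goodm P r U" and s: "|U| <o |P|" and a: "a \<in> P"
  shows "\<exists>y. y \<in> P \<and> y \<notin> Range U \<and>
      (\<forall>q q'. (q,q')\<in>U \<longrightarrow> (r q a \<longrightarrow> r q' y) \<and> (r a q \<longrightarrow> r y q'))"
proof -
  define L where "L = {q'. \<exists>q. (q,q')\<in>U \<and> r q a}"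
  define G where "G = {q'. \<exists>q. (q,q')\<in>U \<and> r a q}"
  have RS: "small_subset P (Range U)" using Range_small g s .
  have RP: "Range U \<subseteq> P" using RS unfolding small_subset_def by blast
  have LS: "small_subset P L" by (rule small_mono[OF _ RS]) (auto simp: L_def)
  have GS: "small_subset P G" by (rule small_mono[OF _ RS]) (auto simp: G_def)
  have UP: "U \<subseteq> P \<times> P" using g unfolding goodm_def by blast
  have LG: "set_less r L G" unfolding set_less_def
  proof (intro ballI)
    fix u v assume "u \<in> L" "v \<in> G"
    then obtain q1 q2 where q: "(q1,u) \<in> U" "r q1 a" "(q2,v) \<in> U" "r a q2"
      unfolding L_def G_def by blast
    have "q1 \<in> P" "q2 \<in> P" using q UP by auto
    hence "r q1 q2" using trn a q by blast
    thus "r u v" using g q unfolding goodm_def by blast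
  qed
  obtain y where y: "y \<in> P" "y \<notin> Range U" "set_less r L {y}" "set_less r {y} G"
  proof (cases "L = {}")
    case True
    show ?thesis
    proof (cases "G = {}")
      case True
      have "|P| =o |P|" by (rule ordIso_refl[OF card_of_Card_order])
      then obtain y where "y \<in> P" "y \<notin> Range U"
        using exists_outside RS unfolding small_subset_def by blast
      thus ?thesis using that \<open>L = {}\<close> \<open>G = {}\<close> unfolding set_less_def by blast
    next
      case False
      obtain y where "y \<in> {x\<in>P. set_less r {x} G}" "y \<notin> Range U"
        using exists_outside[OF part_b(1)[OF po inf u2 GS False]] RS
        unfolding small_subset_def by blast
      thus ?thesis using that \<open>L = {}\<close> unfolding set_less_def by blast
    qed
  next
    case False
    show ?thesis
    proof (cases "G = {}")
      case True
      obtain y where "y \<in> {x\<in>P. set_less r L {x}}" "y \<notin> Range U"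
        using exists_outside[OF part_b(2)[OF po inf u2 LS False]] RS
        unfolding small_subset_def by blast
      thus ?thesis using that \<open>G = {}\<close> unfolding set_less_def by blast
    next
      case False
      obtain y where "y \<in> {x\<in>P. set_less r L {x} \<and> set_less r {x} G}" "y \<notin> Range U"
        using exists_outside[OF part_a[OF po inf u1 LS \<open>L \<noteq> {}\<close> GS False LG]] RS
        unfolding small_subset_def by blast
      thus ?thesis using that by blast
    qed
  qed
  show ?thesis
  proof (intro exI conjI allI impI)
    show "y \<in> P" "y \<notin> Range U" using y by auto
  next
    fix q q' assume "(q,q') \<in> U" "r q a"
    hence "q' \<in> L" unfolding L_def by blast
    thus "r q' y" using y(3) unfolding set_less_def by blast
  next
    fix q q' assume "(q,q') \<in> U" "r a q"
    hence "q' \<in> G" unfolding G_def by blast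
    thus "r y q'" using y(4) unfolding set_less_def by blast
  qed
qed

lemma bck_ex:
  assumes g: "goodm P r U" and s: "|U| <o |P|"
  shows "\<exists>p. p \<in> P \<and> p \<notin> Domain U \<and> (\<forall>q\<in>Domain U. incomp r p q)"
proof -
  have DS: "small_subset P (Domain U)" using Domain_small g s .
  show ?thesis
  proof (cases "Domain U = {}")
    case True
    have "|P| =o |P|" by (rule ordIso_refl[OF card_of_Card_order])
    then obtain y where "y \<in> P" "y \<notin> Domain U"
      using exists_outside DS unfolding small_subset_def by blast
    thus ?thesis using True by blast
  next
    case False
    obtain y where "y \<in> {x\<in>P. \<forall>k\<in>Domain U. incomp r x k}" "y \<notin> Domain U"
      using exists_outside[OF part_b(3)[OF po inf u2 DS False]] DS
      unfolding small_subset_def by blast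
    thus ?thesis by blast
  qed
qed

lemma step1_ok:
  assumes g: "goodm P r U" and s: "|U| <o |P|" and a: "a \<in> P"
  shows "goodm P r (step1 P r U a) \<and> |step1 P r U a| <o |P| \<and> a \<in> Domain (step1 P r U a)"
proof (cases "a \<in> Domain U")
  case True thus ?thesis using g s unfolding step1_def by simp
next
  case False
  let ?y = "fwd P r U a"
  have y: "?y \<in> P \<and> ?y \<notin> Range U \<and>
      (\<forall>q q'. (q,q')\<in>U \<longrightarrow> (r q a \<longrightarrow> r q' ?y) \<and> (r a q \<longrightarrow> r ?y q'))"
    unfolding fwd_def by (rule someI_ex[OF fwd_ex[OF g s a]])
  have "goodm P r (insert (a, ?y) U)"
  proof (rule goodm_insert[OF g a])
    show "?y \<in> P" "?y \<notin> Range U" using y by blast+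
    show "a \<notin> Domain U" by (rule False)
    show "\<not> r a a" by (rule irr[OF a])
    show "\<forall>q q'. (q,q')\<in>U \<longrightarrow> (r q a \<longrightarrow> r q' ?y) \<and> (r a q \<longrightarrow> r ?y q')"
      using y by blast
  qed
  moreover have "|insert (a, ?y) U| <o |P|" by (rule insert_less[OF inf s])
  moreover have "step1 P r U a = insert (a, ?y) U" using False unfolding step1_def by simp
  ultimately show ?thesis by simp
qed

lemma step2_ok:
  assumes g: "goodm P r U" and s: "|U| <o |P|" and a: "a \<in> P"
  shows "goodm P r (step2 P r U a) \<and> |step2 P r U a| <o |P| \<and> a \<in> Range (step2 P r U a)"
proof (cases "a \<in> Range U")
  case True thus ?thesis using g s unfolding step2_def by simp
next
  case False
  let ?p = "bck P r U a"
  have p: "?p \<in> P \<and> ?p \<notin> Domain U \<and> (\<forall>q\<in>Domain U. incomp r ?p q)"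
    unfolding bck_def by (rule someI_ex[OF bck_ex[OF g s]])
  have "goodm P r (insert (?p, a) U)"
  proof (rule goodm_insert[OF g])
    show "?p \<in> P" "a \<in> P" "?p \<notin> Domain U" "a \<notin> Range U" "\<not> r ?p ?p"
      using p a False irr by auto
    show "\<forall>q q'. (q,q')\<in>U \<longrightarrow> (r q ?p \<longrightarrow> r q' a) \<and> (r ?p q \<longrightarrow> r a q')"
    proof (intro allI impI conjI)
      fix q q' assume "(q,q') \<in> U"
      hence "incomp r ?p q" using p by blast
      thus "r q ?p \<Longrightarrow> r q' a" "r ?p q \<Longrightarrow> r a q'" unfolding incomp_def by auto
    qed
  qed
  moreover have "|insert (?p, a) U| <o |P|" by (rule insert_less[OF inf s])
  moreover have "step2 P r U a = insert (?p, a) U" using False unfolding step2_def by simp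
  ultimately show ?thesis by simp
qed

lemma stepM_ok:
  assumes g: "goodm P r U" and s: "|U| <o |P|" and a: "a \<in> P"
  shows "goodm P r (stepM P r U a) \<and> a \<in> Domain (stepM P r U a) \<and> a \<in> Range (stepM P r U a)"
proof -
  have 1: "goodm P r (step1 P r U a)" "|step1 P r U a| <o |P|" "a \<in> Domain (step1 P r U a)"
    using step1_ok[OF g s a] by auto
  have 2: "goodm P r (step2 P r (step1 P r U a) a)" "a \<in> Range (step2 P r (step1 P r U a) a)"
    using step2_ok[OF 1(1,2) a] by auto
  have "step1 P r U a \<subseteq> step2 P r (step1 P r U a) a" unfolding step2_def by auto
  thus ?thesis using 1 2 unfolding stepM_def by blast
qed

end


lemma goodm_Union:
  assumes "\<And>X. X \<in> F \<Longrightarrow> goodm P r X" and "\<And>X Y. X \<in> F \<Longrightarrow> Y \<in> F \<Longrightarrow> X \<subseteq> Y \<or> Y \<subseteq> X"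
  shows "goodm P r (\<Union>F)"
  unfolding goodm_def
proof (intro conjI allI impI)
  show "\<Union>F \<subseteq> P \<times> P" using assms(1) unfolding goodm_def by blast
next
  fix x y x' y' assume h: "(x,y) \<in> \<Union>F" "(x',y') \<in> \<Union>F"
  then obtain X Y where XY: "X \<in> F" "Y \<in> F" "(x,y) \<in> X" "(x',y') \<in> Y" by blast
  obtain Z where Z: "Z \<in> F" "(x,y) \<in> Z" "(x',y') \<in> Z"
    using assms(2)[OF XY(1,2)] XY by blast
  have "goodm P r Z" using assms(1) Z(1) .
  hence "(x = x' \<longleftrightarrow> y = y') \<and> (r x x' \<longrightarrow> r y y')" using Z unfolding goodm_def by blast
  thus "(x = x') = (y = y')" "r x x' \<Longrightarrow> r y y'" by auto
qed

context bf
begin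

lemma nonrev: "\<not> reversible P r"
proof -
  obtain a0 where a0: "a0 \<in> P" using inf by (metis finite.emptyI ex_in_conv)
  have sa0: "small_subset P {a0}" using finite_small inf a0 by blast
  obtain y0 where y0: "y0 \<in> P" "set_less r {a0} {y0}" using u2D[OF u2 sa0] by blast
  obtain z0 where z0: "z0 \<in> P" "\<forall>k\<in>{a0}. incomp r z0 k" using u2D[OF u2 sa0] by blast
  have ry: "r a0 y0" using y0 unfolding set_less_def by blast
  have iz: "incomp r z0 a0" using z0 by blast
  have za: "z0 \<noteq> a0" "\<not> r a0 z0" "\<not> r z0 a0" using iz unfolding incomp_def by auto
  have ya: "y0 \<noteq> a0" using ry irr a0 by blast
  define f0 where "f0 = {(a0,a0),(z0,y0)}"
  have gf0: "goodm P r f0" unfolding goodm_def f0_def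
    using a0 y0(1) z0(1) za ya irr by auto
  define W where "W = |P|"
  have wo: "wo_rel W" unfolding W_def wo_rel_def by (rule card_of_Well_order)
  have FW: "Field W = P" unfolding W_def by (rule Field_card_of)
  define Ws where "Ws = W - Id"
  have wf: "wf Ws" unfolding Ws_def using wo by (rule wo_rel.WF)
  have uS: "\<And>b a. b \<in> underS W a \<longleftrightarrow> (b,a) \<in> Ws" unfolding underS_def Ws_def by auto
  define M where "M = wfrec Ws (\<lambda>g a. stepM P r (f0 \<union> \<Union>(g ` underS W a)) a)"
  define U where "U = (\<lambda>a. f0 \<union> \<Union>(M ` underS W a))"
  have Meq: "\<And>a. M a = stepM P r (U a) a"
  proof -
    fix a
    have "M a = stepM P r (f0 \<union> \<Union>((cut M Ws a) ` underS W a)) a"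
      unfolding M_def by (subst wfrec[OF wf]) simp
    moreover have "(cut M Ws a) ` underS W a = M ` underS W a"
      by (rule image_cong) (auto simp: uS cut_apply)
    ultimately show "M a = stepM P r (U a) a" unfolding U_def by simp
  qed
  have utrans: "\<And>a b c. c \<in> underS W b \<Longrightarrow> b \<in> underS W a \<Longrightarrow> c \<in> underS W a"
  proof -
    fix a b c assume h: "c \<in> underS W b" "b \<in> underS W a"
    hence h2: "(c,b) \<in> W" "(b,a) \<in> W" "c \<noteq> b" "b \<noteq> a" unfolding underS_def by auto
    have "(c,a) \<in> W" using wo_rel.TRANS[OF wo] h2 unfolding trans_def by blast
    moreover have "c \<noteq> a"
    proof
      assume "c = a"
      hence "b = a" using wo_rel.ANTISYM[OF wo] h2 unfolding antisym_def by blast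
      thus False using h2 by blast
    qed
    ultimately show "c \<in> underS W a" unfolding underS_def by blast
  qed
  have utot: "\<And>a b. a \<in> P \<Longrightarrow> b \<in> P \<Longrightarrow> a \<noteq> b \<Longrightarrow> a \<in> underS W b \<or> b \<in> underS W a"
    using wo_rel.TOTALS[OF wo] FW unfolding underS_def by blast
  have uP: "\<And>a. underS W a \<subseteq> P" using FW unfolding underS_def Field_def by blast
  have MU: "\<And>a b. b \<in> underS W a \<Longrightarrow> M b \<subseteq> U a" unfolding U_def by blast
  have UM: "\<And>a. U a \<subseteq> M a" using Meq stepM_sup by metis
  have f0U: "\<And>a. f0 \<subseteq> U a" unfolding U_def by blast
  define Yf where "Yf = (\<lambda>b. fwd P r (U b) b)"
  define Xf where "Xf = (\<lambda>b. bck P r (step1 P r (U b) b) b)"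
  have Msub: "\<And>b. M b \<subseteq> U b \<union> {(b, Yf b), (Xf b, b)}"
    unfolding Yf_def Xf_def using Meq stepM_sub by metis
  have cont: "\<And>a. U a \<subseteq> f0 \<union> (\<lambda>b. (b, Yf b)) ` underS W a \<union> (\<lambda>b. (Xf b, b)) ` underS W a"
  proof -
    fix a show "U a \<subseteq> f0 \<union> (\<lambda>b. (b, Yf b)) ` underS W a \<union> (\<lambda>b. (Xf b, b)) ` underS W a"
    proof (induction a rule: wf_induct[OF wf])
      case (1 a)
      show ?case
      proof
        fix p assume "p \<in> U a"
        hence "p \<in> f0 \<or> (\<exists>b\<in>underS W a. p \<in> M b)" unfolding U_def by blast
        thus "p \<in> f0 \<union> (\<lambda>b. (b, Yf b)) ` underS W a \<union> (\<lambda>b. (Xf b, b)) ` underS W a"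
        proof
          assume "p \<in> f0" thus ?thesis by blast
        next
          assume "\<exists>b\<in>underS W a. p \<in> M b"
          then obtain b where b: "b \<in> underS W a" "p \<in> M b" by blast
          hence "p \<in> U b \<or> p = (b, Yf b) \<or> p = (Xf b, b)" using Msub by blast
          moreover have "U b \<subseteq> f0 \<union> (\<lambda>b. (b, Yf b)) ` underS W b \<union> (\<lambda>b. (Xf b, b)) ` underS W b"
            using 1 b(1) uS by blast
          moreover have "underS W b \<subseteq> underS W a" using utrans b(1) by blast
          ultimately show ?thesis using b(1) by blast
        qed
      qed
    qed
  qed
  have small: "\<And>a. a \<in> P \<Longrightarrow> |U a| <o |P|"
  proof -
    fix a assume a: "a \<in> P"
    have us: "|underS W a| <o |P|" using card_of_underS[OF card_of_Card_order[of P], of a] a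
      unfolding W_def Field_card_of by blast
    have 1: "|(\<lambda>b. (b, Yf b)) ` underS W a| <o |P|"
      by (rule ordLeq_ordLess_trans[OF card_of_image us])
    have 2: "|(\<lambda>b. (Xf b, b)) ` underS W a| <o |P|"
      by (rule ordLeq_ordLess_trans[OF card_of_image us])
    have 3: "|f0| <o |P|" by (rule fin_less[OF _ inf]) (simp add: f0_def)
    have "|f0 \<union> (\<lambda>b. (b, Yf b)) ` underS W a \<union> (\<lambda>b. (Xf b, b)) ` underS W a| <o |P|"
      by (rule card_of_Un_ordLess_infinite[OF inf card_of_Un_ordLess_infinite[OF inf 3 1] 2])
    thus "|U a| <o |P|" by (rule ordLeq_ordLess_trans[OF card_of_mono1[OF cont[of a]]])
  qed
  have goodU: "\<And>a. a \<in> P \<longrightarrow> goodm P r (U a)"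
  proof -
    fix a show "a \<in> P \<longrightarrow> goodm P r (U a)"
    proof (induction a rule: wf_induct[OF wf])
      case (1 a)
      show ?case
      proof
        assume a: "a \<in> P"
        have gM: "\<And>b. b \<in> underS W a \<Longrightarrow> goodm P r (M b)"
        proof -
          fix b assume b: "b \<in> underS W a"
          hence bP: "b \<in> P" using uP by blast
          have "(b,a) \<in> Ws" using b uS by blast
          hence "goodm P r (U b)" using 1 bP by blast
          hence "goodm P r (stepM P r (U b) b)" using stepM_ok[OF _ small[OF bP] bP] by blast
          thus "goodm P r (M b)" by (simp only: Meq)
        qed
        have "goodm P r (\<Union>(insert f0 (M ` underS W a)))"
        proof (rule goodm_Union)
          fix X assume "X \<in> insert f0 (M ` underS W a)"
          thus "goodm P r X" using gf0 gM by blast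
        next
          fix X Y assume X: "X \<in> insert f0 (M ` underS W a)" and Y: "Y \<in> insert f0 (M ` underS W a)"
          have fM: "\<And>b. f0 \<subseteq> M b" using f0U UM by blast
          have MM: "\<And>b c. b \<in> P \<Longrightarrow> c \<in> P \<Longrightarrow> M b \<subseteq> M c \<or> M c \<subseteq> M b"
          proof -
            fix b c assume "b \<in> P" "c \<in> P"
            show "M b \<subseteq> M c \<or> M c \<subseteq> M b"
            proof (cases "b = c")
              case True thus ?thesis by blast
            next
              case False
              hence "b \<in> underS W c \<or> c \<in> underS W b" using utot \<open>b \<in> P\<close> \<open>c \<in> P\<close> by blast
              thus ?thesis using MU UM by blast
            qed
          qed
          show "X \<subseteq> Y \<or> Y \<subseteq> X"
          proof (cases "X = f0")
            case True thus ?thesis using Y fM by blast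
          next
            case False
            then obtain b where b: "b \<in> underS W a" "X = M b" using X by blast
            show ?thesis
            proof (cases "Y = f0")
              case True thus ?thesis using b fM by blast
            next
              case False
              then obtain c where c: "c \<in> underS W a" "Y = M c" using Y by blast
              have "b \<in> P" "c \<in> P" using b c uP by blast+
              thus ?thesis using MM b c by blast
            qed
          qed
        qed
        thus "goodm P r (U a)" unfolding U_def by simp
      qed
    qed
  qed
  have Mok: "\<And>a. a \<in> P \<Longrightarrow> goodm P r (M a) \<and> a \<in> Domain (M a) \<and> a \<in> Range (M a)"
  proof -
    fix a assume a: "a \<in> P"
    have "goodm P r (U a)" using goodU a by blast
    hence "goodm P r (stepM P r (U a) a) \<and> a \<in> Domain (stepM P r (U a) a) \<and> a \<in> Range (stepM P r (U a) a)"
      using stepM_ok[OF _ small[OF a] a] by blast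
    thus "goodm P r (M a) \<and> a \<in> Domain (M a) \<and> a \<in> Range (M a)" by (simp only: Meq)
  qed
  define R where "R = \<Union>(M ` P)"
  have gR: "goodm P r R" unfolding R_def
  proof (rule goodm_Union)
    fix X assume "X \<in> M ` P" thus "goodm P r X" using Mok by blast
  next
    fix X Y assume X: "X \<in> M ` P" and Y: "Y \<in> M ` P"
    then obtain b c where bc: "b \<in> P" "c \<in> P" "X = M b" "Y = M c" by blast
    show "X \<subseteq> Y \<or> Y \<subseteq> X"
    proof (cases "b = c")
      case True thus ?thesis using bc by blast
    next
      case False
      hence "b \<in> underS W c \<or> c \<in> underS W b" using utot bc by blast
      thus ?thesis using MU UM bc by blast
    qed
  qed
  have RP: "R \<subseteq> P \<times> P" using gR unfolding goodm_def by blast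
  have DR: "\<And>x. x \<in> P \<Longrightarrow> \<exists>y. (x,y) \<in> R" using Mok unfolding R_def by blast
  have RR: "\<And>y. y \<in> P \<Longrightarrow> \<exists>x. (x,y) \<in> R" using Mok unfolding R_def by blast
  have fR: "f0 \<subseteq> R" unfolding R_def using f0U UM a0 by blast
  have gR1: "\<And>x y x' y'. (x,y) \<in> R \<Longrightarrow> (x',y') \<in> R \<Longrightarrow> (x = x' \<longleftrightarrow> y = y')"
    using gR unfolding goodm_def by blast
  have gR2: "\<And>x y x' y'. (x,y) \<in> R \<Longrightarrow> (x',y') \<in> R \<Longrightarrow> r x x' \<Longrightarrow> r y y'"
    using gR unfolding goodm_def by blast
  define F where "F = (\<lambda>x. THE y. (x,y) \<in> R)"
  have Feq: "\<And>x y. (x,y) \<in> R \<Longrightarrow> F x = y"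
  proof -
    fix x y assume h: "(x,y) \<in> R"
    show "F x = y" unfolding F_def
    proof (rule the_equality)
      show "(x,y) \<in> R" by (rule h)
      fix y' assume "(x,y') \<in> R"
      thus "y' = y" using gR1[OF h] by blast
    qed
  qed
  have Fx: "\<And>x. x \<in> P \<Longrightarrow> (x, F x) \<in> R"
  proof -
    fix x assume "x \<in> P"
    then obtain y where "(x,y) \<in> R" using DR by blast
    thus "(x, F x) \<in> R" using Feq by simp
  qed
  have bij: "bij_betw F P P" unfolding bij_betw_def inj_on_def
  proof (intro conjI ballI impI)
    fix x x' assume "x \<in> P" "x' \<in> P" "F x = F x'"
    thus "x = x'" using gR1[OF Fx Fx] by blast
  next
    show "F ` P = P"
    proof
      show "F ` P \<subseteq> P" using Fx RP by blast
      show "P \<subseteq> F ` P"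
      proof
        fix y assume "y \<in> P"
        then obtain x where "(x,y) \<in> R" using RR by blast
        hence "x \<in> P" "F x = y" using RP Feq by auto
        thus "y \<in> F ` P" by blast
      qed
    qed
  qed
  have hom: "bij_hom P r F" unfolding bij_hom_def
  proof (intro conjI ballI impI)
    show "bij_betw F P P" by (rule bij)
    fix p q assume "p \<in> P" "q \<in> P" "r p q"
    thus "r (F p) (F q)" using gR2[OF Fx Fx] by blast
  qed
  have "(a0,a0) \<in> R" "(z0,y0) \<in> R" using fR unfolding f0_def by blast+
  hence "F a0 = a0" "F z0 = y0" using Feq by blast+
  then have "\<not> automorphism P r F"
  proof -
    assume e: "F a0 = a0" "F z0 = y0"
    show ?thesis
    proof
      assume "automorphism P r F"
      hence "r a0 z0 \<longleftrightarrow> r (F a0) (F z0)" using a0 z0(1) unfolding automorphism_def by blast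
      thus False using e ry za(2) by simp
    qed
  qed
  thus ?thesis using hom unfolding reversible_def by blast
qed

end

lemma hu_ext:
  assumes po: "strict_po P r" and inf: "infinite P" and hu: "homogeneous_universal P r"
    and A: "small_subset P A" and LoA: "Lo \<subseteq> A" and HiA: "Hi \<subseteq> A"
    and dLo: "\<forall>u\<in>A. \<forall>v\<in>Lo. r u v \<longrightarrow> u \<in> Lo"
    and uHi: "\<forall>u\<in>Hi. \<forall>v\<in>A. r u v \<longrightarrow> v \<in> Hi"
    and LH: "\<forall>u\<in>Lo. \<forall>v\<in>Hi. r u v"
  shows "\<exists>x\<in>P. x \<notin> A \<and> (\<forall>a\<in>A. r a x \<longleftrightarrow> a \<in> Lo) \<and> (\<forall>a\<in>A. r x a \<longleftrightarrow> a \<in> Hi)"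
proof -
  have AP: "A \<subseteq> P" using A unfolding small_subset_def by blast
  have irr: "\<And>x. x \<in> P \<Longrightarrow> \<not> r x x" using po unfolding strict_po_def by blast
  have trn: "\<And>x y z. x \<in> P \<Longrightarrow> y \<in> P \<Longrightarrow> z \<in> P \<Longrightarrow> r x y \<Longrightarrow> r y z \<Longrightarrow> r x z"
    using po unfolding strict_po_def by blast
  have "|P| =o |P|" by (rule ordIso_refl[OF card_of_Card_order])
  then obtain x0 where x0: "x0 \<in> P" "x0 \<notin> A" using exists_outside A unfolding small_subset_def by blast
  define Q where "Q = insert x0 A"
  define s where "s = (\<lambda>u v. (u \<in> A \<and> v \<in> A \<and> r u v) \<or> (u \<in> Lo \<and> v = x0) \<or> (u = x0 \<and> v \<in> Hi))"
  have sA: "\<And>u v. u \<in> A \<Longrightarrow> v \<in> A \<Longrightarrow> s u v \<longleftrightarrow> r u v" unfolding s_def using x0(2) by blast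
  have spo: "strict_po Q s" unfolding strict_po_def
  proof (intro conjI ballI impI)
    fix x assume "x \<in> Q"
    thus "\<not> s x x" unfolding s_def Q_def using irr AP LoA HiA x0(2) by blast
  next
    fix x y z assume h: "x \<in> Q" "y \<in> Q" "z \<in> Q" "s x y" "s y z"
    show "s x z"
    proof (cases "x = x0")
      case True
      hence yH: "y \<in> Hi" using h(4) x0(2) LoA unfolding s_def by blast
      hence "y \<in> A" using HiA by blast
      hence "z \<in> Hi" using h(5) yH uHi LH irr AP unfolding s_def by blast
      thus ?thesis using True unfolding s_def by blast
    next
      case xn: False
      hence xA: "x \<in> A" using h(1) unfolding Q_def by blast
      show ?thesis
      proof (cases "y = x0")
        case True
        hence "x \<in> Lo" "z \<in> Hi" using h(4,5) x0(2) xA HiA LoA unfolding s_def by blast+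
        thus ?thesis using LH xA HiA unfolding s_def by blast
      next
        case yn: False
        hence yA: "y \<in> A" using h(2) unfolding Q_def by blast
        have rxy: "r x y" using h(4) xA yA sA by blast
        show ?thesis
        proof (cases "z = x0")
          case True
          hence "y \<in> Lo" using h(5) yA x0(2) unfolding s_def by blast
          hence "x \<in> Lo" using dLo xA rxy by blast
          thus ?thesis using True unfolding s_def by blast
        next
          case False
          hence zA: "z \<in> A" using h(3) unfolding Q_def by blast
          have "r y z" using h(5) yA zA sA by blast
          hence "r x z" using trn rxy xA yA zA AP by blast
          thus ?thesis using xA zA sA by blast
        qed
      qed
    qed
  qed
  have QP: "Q \<subseteq> P" unfolding Q_def using x0 AP by blast
  have "( |Q|, |P| ) \<in> ordLeq" by (rule card_of_mono1[OF QP])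
  then obtain g where g: "order_embedding Q s P r g"
    using hu spo unfolding homogeneous_universal_def by blast
  have ginj: "inj_on g Q" and gQ: "g ` Q \<subseteq> P" and gs: "\<forall>a\<in>Q. \<forall>b\<in>Q. s a b \<longleftrightarrow> r (g a) (g b)"
    using g unfolding order_embedding_def by blast+
  have AQ: "A \<subseteq> Q" unfolding Q_def by blast
  have iso: "sub_iso r A (g ` A) g" unfolding sub_iso_def
  proof
    show "bij_betw g A (g ` A)" using inj_on_subset[OF ginj AQ] by (simp add: bij_betw_imageI)
    show "\<forall>a\<in>A. \<forall>a'\<in>A. r a a' \<longleftrightarrow> r (g a) (g a')" using gs sA AQ by blast
  qed
  have sgA: "small_subset P (g ` A)" unfolding small_subset_def
  proof
    show "g ` A \<subseteq> P" using gQ AQ by blast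
    show "|g ` A| <o |P|" using ordLeq_ordLess_trans[OF card_of_image] A unfolding small_subset_def by blast
  qed
  obtain F where F: "automorphism P r F" "\<forall>a\<in>A. F a = g a"
    using hu A sgA iso unfolding homogeneous_universal_def by blast
  have Fb: "bij_betw F P P" and Fr: "\<forall>p\<in>P. \<forall>q\<in>P. r p q \<longleftrightarrow> r (F p) (F q)"
    using F(1) unfolding automorphism_def by blast+
  have gx0: "g x0 \<in> P" using gQ unfolding Q_def by blast
  define x where "x = inv_into P F (g x0)"
  have xP: "x \<in> P" unfolding x_def using Fb gx0 by (metis bij_betw_def inv_into_into)
  have Fx: "F x = g x0" unfolding x_def using Fb gx0 by (metis bij_betw_def f_inv_into_f)
  have x0Q: "x0 \<in> Q" unfolding Q_def by blast
  show ?thesis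
  proof (intro bexI conjI ballI)
    show "x \<in> P" by (rule xP)
    show "x \<notin> A"
    proof
      assume "x \<in> A"
      hence "g x = g x0" using F(2) Fx by simp
      hence "x = x0" using ginj AQ x0Q \<open>x \<in> A\<close> unfolding inj_on_def by blast
      thus False using x0(2) \<open>x \<in> A\<close> by blast
    qed
  next
    fix a assume a: "a \<in> A"
    have "r a x \<longleftrightarrow> r (F a) (F x)" using Fr a AP xP by blast
    also have "\<dots> \<longleftrightarrow> r (g a) (g x0)" using F(2) a Fx by simp
    also have "\<dots> \<longleftrightarrow> s a x0" using gs a AQ x0Q by blast
    also have "\<dots> \<longleftrightarrow> a \<in> Lo" unfolding s_def using a x0(2) by blast
    finally show "r a x \<longleftrightarrow> a \<in> Lo" .
  next
    fix a assume a: "a \<in> A"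
    have "r x a \<longleftrightarrow> r (F x) (F a)" using Fr a AP xP by blast
    also have "\<dots> \<longleftrightarrow> r (g x0) (g a)" using F(2) a Fx by simp
    also have "\<dots> \<longleftrightarrow> s x0 a" using gs a AQ x0Q by blast
    also have "\<dots> \<longleftrightarrow> a \<in> Hi" unfolding s_def using a x0(2) by blast
    finally show "r x a \<longleftrightarrow> a \<in> Hi" .
  qed
qed


lemma hu_u1:
  assumes po: "strict_po P r" and inf: "infinite P" and hu: "homogeneous_universal P r"
  shows "cond_u1 P r"
  unfolding cond_u1_def
proof (intro allI impI)
  fix L G assume h: "small_subset P L \<and> small_subset P G \<and> L \<noteq> {} \<and> G \<noteq> {} \<and> set_less r L G"
  have LP: "L \<subseteq> P" "G \<subseteq> P" using h unfolding small_subset_def by blast+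
  have irr: "\<And>x. x \<in> P \<Longrightarrow> \<not> r x x" using po unfolding strict_po_def by blast
  have trn: "\<And>x y z. x \<in> P \<Longrightarrow> y \<in> P \<Longrightarrow> z \<in> P \<Longrightarrow> r x y \<Longrightarrow> r y z \<Longrightarrow> r x z"
    using po unfolding strict_po_def by blast
  have LG: "\<forall>u\<in>L. \<forall>v\<in>G. r u v" using h unfolding set_less_def by blast
  have sm: "small_subset P (L \<union> G)" using small_Un[OF inf] h by blast
  have d: "\<forall>u\<in>L \<union> G. \<forall>v\<in>L. r u v \<longrightarrow> u \<in> L"
  proof (intro ballI impI)
    fix u v assume u: "u \<in> L \<union> G" and v: "v \<in> L" and r: "r u v"
    show "u \<in> L"
    proof (rule ccontr)
      assume "u \<notin> L"
      hence "u \<in> G" using u by blast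
      hence "r v u" using LG v by blast
      hence "r v v" using trn[of v u v] r v \<open>u \<in> G\<close> LP by blast
      thus False using irr v LP by blast
    qed
  qed
  have up: "\<forall>u\<in>G. \<forall>v\<in>L \<union> G. r u v \<longrightarrow> v \<in> G"
  proof (intro ballI impI)
    fix u v assume u: "u \<in> G" and v: "v \<in> L \<union> G" and r: "r u v"
    show "v \<in> G"
    proof (rule ccontr)
      assume "v \<notin> G"
      hence "v \<in> L" using v by blast
      hence "r v u" using LG u by blast
      hence "r u u" using trn[of u v u] r u \<open>v \<in> L\<close> LP by blast
      thus False using irr u LP by blast
    qed
  qed
  obtain x where x: "x \<in> P" "\<forall>a\<in>L \<union> G. r a x \<longleftrightarrow> a \<in> L" "\<forall>a\<in>L \<union> G. r x a \<longleftrightarrow> a \<in> G"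
    using hu_ext[OF po inf hu sm _ _ d up LG] by blast
  show "\<exists>x\<in>P. set_less r L {x} \<and> set_less r {x} G"
    using x unfolding set_less_def by blast
qed

lemma hu_u2:
  assumes po: "strict_po P r" and inf: "infinite P" and hu: "homogeneous_universal P r"
  shows "cond_u2 P r"
  unfolding cond_u2_def
proof (intro allI impI)
  fix K assume h: "small_subset P K \<and> K \<noteq> {}"
  have KP: "K \<subseteq> P" using h unfolding small_subset_def by blast
  have trn: "\<And>x y z. x \<in> P \<Longrightarrow> y \<in> P \<Longrightarrow> z \<in> P \<Longrightarrow> r x y \<Longrightarrow> r y z \<Longrightarrow> r x z"
    using po unfolding strict_po_def by blast
  have sm: "small_subset P K" using h by blast
  obtain x where x: "x \<in> P" "\<forall>a\<in>K. r x a \<longleftrightarrow> a \<in> K"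
    using hu_ext[OF po inf hu sm, of "{}" K] by blast
  obtain y where y: "y \<in> P" "\<forall>a\<in>K. r a y \<longleftrightarrow> a \<in> K"
    using hu_ext[OF po inf hu sm, of K "{}"] by blast
  obtain z where z: "z \<in> P" "z \<notin> K" "\<forall>a\<in>K. \<not> r a z" "\<forall>a\<in>K. \<not> r z a"
    using hu_ext[OF po inf hu sm, of "{}" "{}"] by blast
  show "\<exists>x\<in>P. \<exists>y\<in>P. \<exists>z\<in>P. set_less r {x} K \<and> set_less r K {y} \<and> (\<forall>k\<in>K. incomp r z k)"
  proof (intro bexI conjI)
    show "set_less r {x} K" using x unfolding set_less_def by blast
    show "set_less r K {y}" using y unfolding set_less_def by blast
    show "\<forall>k\<in>K. incomp r z k" using z unfolding incomp_def by blast
  qed (use x y z in blast)+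
qed

theorem theorem3p5:
  fixes P :: "'a set" and r :: "'a \<Rightarrow> 'a \<Rightarrow> bool"
  assumes "strict_po P r" and "infinite P"
  shows "(cond_u1 P r \<and> cond_u2 P r \<longrightarrow>
           (\<forall>L G K. small_subset P L \<and> small_subset P G \<and> small_subset P K \<and>
               L \<noteq> {} \<and> G \<noteq> {} \<and> K \<noteq> {} \<and> set_less r L G \<longrightarrow>
               (card_of {x\<in>P. set_less r L {x} \<and> set_less r {x} G}, card_of P) \<in> ordIso \<and>
               (card_of {x\<in>P. set_less r {x} K}, card_of P) \<in> ordIso \<and>
               (card_of {x\<in>P. set_less r K {x}}, card_of P) \<in> ordIso \<and>
               (card_of {x\<in>P. \<forall>k\<in>K. incomp r x k}, card_of P) \<in> ordIso) \<and>
           (regularCard (card_of P) \<longrightarrow> \<not> reversible P r))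
       \<and> (regularCard (card_of P) \<and> homogeneous_universal P r \<longrightarrow> \<not> reversible P r)"
proof (intro conjI impI allI)
  assume u: "cond_u1 P r \<and> cond_u2 P r"
  then interpret bf P r using assms by unfold_locales blast+
  fix L G K
  assume h: "small_subset P L \<and> small_subset P G \<and> small_subset P K \<and>
               L \<noteq> {} \<and> G \<noteq> {} \<and> K \<noteq> {} \<and> set_less r L G"
  show "(card_of {x\<in>P. set_less r L {x} \<and> set_less r {x} G}, card_of P) \<in> ordIso"
    using part_a[OF assms u1] h by blast
  show "(card_of {x\<in>P. set_less r {x} K}, card_of P) \<in> ordIso"
    using part_b(1)[OF assms u2] h by blast
  show "(card_of {x\<in>P. set_less r K {x}}, card_of P) \<in> ordIso"
    using part_b(2)[OF assms u2] h by blast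
  show "(card_of {x\<in>P. \<forall>k\<in>K. incomp r x k}, card_of P) \<in> ordIso"
    using part_b(3)[OF assms u2] h by blast
next
  assume u: "cond_u1 P r \<and> cond_u2 P r"
  then interpret bf P r using assms by unfold_locales blast+
  show "\<not> reversible P r" by (rule nonrev)
next
  assume h: "regularCard (card_of P) \<and> homogeneous_universal P r"
  have "cond_u1 P r" "cond_u2 P r" using hu_u1[OF assms] hu_u2[OF assms] h by blast+
  then interpret bf P r using assms by unfold_locales blast+
  show "\<not> reversible P r" by (rule nonrev)
qed

end
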